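(* Let $M\ge2$ and let $\mathcal{P}$ be a Class II source set on $\{1,\dots,M\}$ with $P_1\ge P_2\ge\dots\ge P_M$ for every $P\in\mathcal{P}$, and let $D^{(M-1)}=\sup_{P\in\mathcal{P}}\sum_{i=2}^{M}P_i$. Then for $D\in(0,1]$, $\epsilon^*_{\mathrm{DP}}(\mathcal{P},D)=0$ if and only if $D\ge D^{(M-1)}$.
   Context: A source set is a nonempty set $\mathcal{P}$ of probability distributions on $\{1,\dots,M\}$; Class I means its convex hull contains the uniform distribution; Class II means it is not Class I and a single permutation orders all its distributions decreasingly. A mechanism is an $M\times M$ row-stochastic matrix $Q$ with entries $Q(j|i)$; its diagonal distortions are $D_i=1-Q(i|i)$. $Q$ is $(\mathcal{P},D)$-valid if $\sum_iP_iD_i\le D$ for all $P\in\mathcal{P}$ (average Hamming distortion); $\mathcal{Q}(\mathcal{P},D)$ is the set of these. $\epsilon_{\mathrm{DP}}(Q)=\min\{\epsilon\ge0:Q(\hat x|x_1)\le e^\epsilon Q(\hat x|x_2)\ \forall x_1,x_2,\hat x\}$ ($+\infty$ if none; all-zero columns allowed), and $\epsilon^*_{\mathrm{DP}}(\mathcal{P},D)=\min_{Q\in\mathcal{Q}(\mathcal{P},D)}\epsilon_{\mathrm{DP}}(Q)$. *)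

theory Defs
  imports "HOL-Analysis.Analysis"
begin

text \<open>Probability distributions on {1..M} are functions nat => real; only the values on
  {1..M} matter. A mechanism Q is a function nat => nat => real with Q x xh = Q(xh|x).\<close>

definition prob_dist :: "nat \<Rightarrow> (nat \<Rightarrow> real) \<Rightarrow> bool" where
  "prob_dist M P \<longleftrightarrow> (\<forall>i\<in>{1..M}. 0 \<le> P i) \<and> (\<Sum>i=1..M. P i) = 1"

definition source_set :: "nat \<Rightarrow> (nat \<Rightarrow> real) set \<Rightarrow> bool" where
  "source_set M \<P> \<longleftrightarrow> \<P> \<noteq> {} \<and> (\<forall>P\<in>\<P>. prob_dist M P)"

text \<open>Class I: the uniform distribution lies in the convex hull of the source set
  (convex hull written out as finite convex combinations, compared on {1..M}).\<close>
definition class_I :: "nat \<Rightarrow> (nat \<Rightarrow> real) set \<Rightarrow> bool" where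
  "class_I M \<P> \<longleftrightarrow> source_set M \<P> \<and>
     (\<exists>S w. finite S \<and> S \<subseteq> \<P> \<and> (\<forall>P\<in>S. 0 \<le> w P) \<and> (\<Sum>P\<in>S. w P) = 1 \<and>
        (\<forall>i\<in>{1..M}. (\<Sum>P\<in>S. w P * P i) = 1 / real M))"

definition class_II :: "nat \<Rightarrow> (nat \<Rightarrow> real) set \<Rightarrow> bool" where
  "class_II M \<P> \<longleftrightarrow> source_set M \<P> \<and> \<not> class_I M \<P> \<and>
     (\<exists>\<sigma>. bij_betw \<sigma> {1..M} {1..M} \<and>
        (\<forall>P\<in>\<P>. \<forall>i j. 1 \<le> i \<and> i \<le> j \<and> j \<le> M \<longrightarrow> P (\<sigma> j) \<le> P (\<sigma> i)))"

definition mechanism :: "nat \<Rightarrow> (nat \<Rightarrow> nat \<Rightarrow> real) \<Rightarrow> bool" where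
  "mechanism M Q \<longleftrightarrow> (\<forall>x\<in>{1..M}. (\<forall>xh\<in>{1..M}. 0 \<le> Q x xh) \<and> (\<Sum>xh=1..M. Q x xh) = 1)"

definition valid_mech :: "nat \<Rightarrow> (nat \<Rightarrow> real) set \<Rightarrow> real \<Rightarrow> (nat \<Rightarrow> nat \<Rightarrow> real) \<Rightarrow> bool" where
  "valid_mech M \<P> D Q \<longleftrightarrow> mechanism M Q \<and>
     (\<forall>P\<in>\<P>. (\<Sum>i=1..M. P i * (1 - Q i i)) \<le> D)"

text \<open>epsilon_DP(Q): least eps >= 0 with Q(xh|x1) <= exp eps * Q(xh|x2); +infinity if none.\<close>
definition eps_DP :: "nat \<Rightarrow> (nat \<Rightarrow> nat \<Rightarrow> real) \<Rightarrow> ereal" where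
  "eps_DP M Q = Inf {ereal e | e. 0 \<le> e \<and>
     (\<forall>x1\<in>{1..M}. \<forall>x2\<in>{1..M}. \<forall>xh\<in>{1..M}. Q x1 xh \<le> exp e * Q x2 xh)}"

definition eps_star :: "nat \<Rightarrow> (nat \<Rightarrow> real) set \<Rightarrow> real \<Rightarrow> ereal" where
  "eps_star M \<P> D = Inf {eps_DP M Q | Q. valid_mech M \<P> D Q}"

end

theory Submission
  imports Defs
begin

lemma sum_split1:
  fixes P :: "nat \<Rightarrow> real"
  assumes "M \<ge> 1"
  shows "(\<Sum>i=1..M. P i) = P 1 + (\<Sum>i=2..M. P i)"
proof -
  have "{1..M} = insert 1 {2..M}" using assms by auto
  then show ?thesis by simp
qed

lemma eps_DP_nonneg: "eps_DP M Q \<ge> 0"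
  unfolding eps_DP_def by (rule Inf_greatest) auto

theorem lemma5:
  fixes M :: nat and \<P> :: "(nat \<Rightarrow> real) set" and D :: real
  assumes "M \<ge> 2"
    and "class_II M \<P>"
    and "\<forall>P\<in>\<P>. \<forall>i j. 1 \<le> i \<and> i \<le> j \<and> j \<le> M \<longrightarrow> P j \<le> P i"
    and "0 < D" and "D \<le> 1"
  shows "eps_star M \<P> D = 0 \<longleftrightarrow> D \<ge> (SUP P\<in>\<P>. \<Sum>i=2..M. P i)"
proof -
  have ss: "source_set M \<P>" using assms(2) unfolding class_II_def by auto
  hence ne: "\<P> \<noteq> {}" and pd: "\<And>P. P \<in> \<P> \<Longrightarrow> prob_dist M P"
    unfolding source_set_def by auto
  have M1: "M \<ge> 1" using assms(1) by simp
  have split: "\<And>P. P \<in> \<P> \<Longrightarrow> (\<Sum>i=2..M. P i) = 1 - P 1"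
  proof -
    fix P assume "P \<in> \<P>"
    hence "(\<Sum>i=1..M. P i) = 1" using pd unfolding prob_dist_def by auto
    thus "(\<Sum>i=2..M. P i) = 1 - P 1" using sum_split1[OF M1, of P] by linarith
  qed
  have bdd: "bdd_above ((\<lambda>P. \<Sum>i=2..M. P i) ` \<P>)"
  proof (rule bdd_aboveI2)
    fix P assume "P \<in> \<P>"
    moreover have "P 1 \<ge> 0" using pd[OF \<open>P \<in> \<P>\<close>] M1 unfolding prob_dist_def by auto
    ultimately show "(\<Sum>i=2..M. P i) \<le> 1" using split by simp
  qed
  show ?thesis
  proof
    assume h: "eps_star M \<P> D = 0"
    show "D \<ge> (SUP P\<in>\<P>. \<Sum>i=2..M. P i)"
    proof (rule ccontr)
      assume "\<not> ?thesis"
      hence "D < (SUP P\<in>\<P>. \<Sum>i=2..M. P i)" by simp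
      then obtain P where P: "P \<in> \<P>" "D < (\<Sum>i=2..M. P i)"
        using less_cSUP_iff[OF ne bdd] by auto
      have P1lt: "P 1 < 1 - D" using P split by auto
      have dec: "\<And>i. i \<in> {1..M} \<Longrightarrow> P i \<le> P 1" using assms(3) P(1) by auto
      have nn: "\<And>i. i \<in> {1..M} \<Longrightarrow> 0 \<le> P i" using pd[OF P(1)] unfolding prob_dist_def by auto
      have "1 = (\<Sum>i=1..M. P i)" using pd[OF P(1)] unfolding prob_dist_def by auto
      also have "\<dots> \<le> (\<Sum>i=1..M. P 1)" by (rule sum_mono) (rule dec)
      also have "\<dots> = real M * P 1" by simp
      finally have "1 \<le> real M * P 1" .
      hence P1pos: "P 1 > 0" using M1
        by (smt (verit) mult_nonneg_nonpos of_nat_0_le_iff)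
      define c where "c = ln ((1 - D) / P 1)"
      have cpos: "c > 0" unfolding c_def using P1lt P1pos by simp
      have "eps_star M \<P> D \<ge> ereal c"
        unfolding eps_star_def
      proof (rule Inf_greatest, clarify)
        fix Q assume V: "valid_mech M \<P> D Q"
        hence mech: "mechanism M Q" and dist: "(\<Sum>i=1..M. P i * (1 - Q i i)) \<le> D"
          using P(1) unfolding valid_mech_def by auto
        have Qnn: "\<And>i. i \<in> {1..M} \<Longrightarrow> 0 \<le> Q 1 i" using mech M1 unfolding mechanism_def by auto
        have Qs: "(\<Sum>i=1..M. Q 1 i) = 1" using mech M1 unfolding mechanism_def by auto
        show "ereal c \<le> eps_DP M Q"
          unfolding eps_DP_def
        proof (rule Inf_greatest, clarify)
          fix e assume e0: "0 \<le> e" and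
            H: "\<forall>x1\<in>{1..M}. \<forall>x2\<in>{1..M}. \<forall>xh\<in>{1..M}. Q x1 xh \<le> exp e * Q x2 xh"
          have "(\<Sum>i=1..M. P i * Q i i) \<le> (\<Sum>i=1..M. P 1 * (exp e * Q 1 i))"
          proof (rule sum_mono)
            fix i assume i: "i \<in> {1..M}"
            have "Q i i \<le> exp e * Q 1 i" using H i M1 by auto
            hence "P i * Q i i \<le> P i * (exp e * Q 1 i)" using nn[OF i] by (simp add: mult_left_mono)
            also have "\<dots> \<le> P 1 * (exp e * Q 1 i)"
              using dec[OF i] Qnn[OF i] by (simp add: mult_right_mono)
            finally show "P i * Q i i \<le> P 1 * (exp e * Q 1 i)" .
          qed
          also have "\<dots> = P 1 * exp e" using Qs by (simp add: sum_distrib_left[symmetric])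
          finally have A: "(\<Sum>i=1..M. P i * Q i i) \<le> P 1 * exp e" .
          have "(\<Sum>i=1..M. P i * (1 - Q i i)) = (\<Sum>i=1..M. P i) - (\<Sum>i=1..M. P i * Q i i)"
            by (simp add: algebra_simps sum_subtractf)
          also have "(\<Sum>i=1..M. P i) = 1" using pd[OF P(1)] unfolding prob_dist_def by auto
          finally have "1 - D \<le> P 1 * exp e" using A dist by linarith
          hence "(1 - D) / P 1 \<le> exp e" using P1pos by (simp add: field_simps)
          hence "c \<le> e" unfolding c_def using P1lt P1pos
            by (metis divide_pos_pos ln_exp ln_le_cancel_iff diff_gt_0_iff_gt assms(4) le_less_trans less_le_not_le exp_gt_zero)
          thus "ereal c \<le> ereal e" by simp
        qed
      qed
      thus False using h cpos by simp
    qed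
  next
    assume h: "D \<ge> (SUP P\<in>\<P>. \<Sum>i=2..M. P i)"
    define Q :: "nat \<Rightarrow> nat \<Rightarrow> real" where "Q = (\<lambda>x xh. if xh = 1 then 1 else 0)"
    have mech: "mechanism M Q" unfolding mechanism_def Q_def using M1
      by (simp add: sum.delta)
    have V: "valid_mech M \<P> D Q" unfolding valid_mech_def
    proof (intro conjI mech ballI)
      fix P assume P: "P \<in> \<P>"
      have "(\<Sum>i=1..M. P i * (1 - Q i i)) = P 1 * (1 - Q 1 1) + (\<Sum>i=2..M. P i * (1 - Q i i))"
        by (rule sum_split1[OF M1])
      also have "\<dots> = (\<Sum>i=2..M. P i)" unfolding Q_def by simp
      also have "\<dots> \<le> (SUP P\<in>\<P>. \<Sum>i=2..M. P i)" using cSUP_upper[OF P bdd] .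
      finally show "(\<Sum>i=1..M. P i * (1 - Q i i)) \<le> D" using h by linarith
    qed
    have "eps_DP M Q \<le> 0" unfolding eps_DP_def
      by (rule Inf_lower) (auto simp: Q_def intro!: exI[of _ 0])
    hence "eps_star M \<P> D \<le> 0" unfolding eps_star_def
      using V by (metis (mono_tags, lifting) Inf_lower mem_Collect_eq order_trans)
    moreover have "eps_star M \<P> D \<ge> 0" unfolding eps_star_def
      by (rule Inf_greatest) (auto intro: eps_DP_nonneg)
    ultimately show "eps_star M \<P> D = 0" by simp
  qed
qed

end
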